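(* Let $\alpha\in(\pi/8,3\pi/8)$ with $\alpha/\pi\notin\mathbb{Q}$, $\beta=\alpha-\pi/2$, $\rho=0.01$, $A_1=\rho R(\alpha)$, $A_2=\rho R(\beta)$ where $R(\theta)=\begin{bmatrix}\cos\theta&-\sin\theta\\ \sin\theta&\cos\theta\end{bmatrix}$, and $c(x)=x_1^2+2x_2^2$ for $x=[x_1,x_2]^\top\in\mathbb{R}^2$. Then the optimal value function $J^\star$ of $\{A_1,A_2\}$ with cost $c$ is non-differentiable on a dense subset of $\mathbb{R}^2$.
   Context: For the switched linear system $\xi(t+1)=A_{\sigma(t)}\xi(t)$ with switching signal $\sigma:\mathbb{N}\to\{1,2\}$, $\xi(t,x,\sigma)$ denotes the solution with $\xi(0)=x$, and $J^\star(x)=\inf_\sigma\sum_{t=0}^\infty c(\xi(t,x,\sigma))$. *)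

theory Defs
  imports "HOL-Analysis.Analysis"
begin

definition rot :: "real \<Rightarrow> real^2^2" where
  "rot \<theta> = vector [vector [cos \<theta>, - sin \<theta>], vector [sin \<theta>, cos \<theta>]]"

fun sw_sol :: "(nat \<Rightarrow> real^'n^'n) \<Rightarrow> nat \<Rightarrow> real^'n \<Rightarrow> (nat \<Rightarrow> nat) \<Rightarrow> real^'n" where
  "sw_sol A 0 x \<sigma> = x"
| "sw_sol A (Suc t) x \<sigma> = A (\<sigma> t) *v sw_sol A t x \<sigma>"

definition Jstar :: "(nat \<Rightarrow> real^'n^'n) \<Rightarrow> (real^'n \<Rightarrow> real) \<Rightarrow> real^'n \<Rightarrow> ennreal" where
  "Jstar A c x = (INF \<sigma>\<in>{\<sigma>. \<forall>t. \<sigma> t \<in> {1,2}}. (\<Sum>t. ennreal (c (sw_sol A t x \<sigma>))))"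

end

theory Submission
  imports Defs "HOL-Analysis.Kronecker_Approximation_Theorem"
begin


definition P1 :: "real \<Rightarrow> real^2 \<Rightarrow> real" where
  "P1 a y = cos a * y$1 - sin a * y$2"
definition P2 :: "real \<Rightarrow> real^2 \<Rightarrow> real" where
  "P2 a y = sin a * y$1 + cos a * y$2"

lemma rot_v1: "(rot a *v y) $ 1 = P1 a y"
  by (simp add: rot_def P1_def matrix_vector_mult_def sum_2)
lemma rot_v2: "(rot a *v y) $ 2 = P2 a y"
  by (simp add: rot_def P2_def matrix_vector_mult_def sum_2)

lemma rot_mult: "rot a *v (rot b *v y) = rot (a + b) *v y"
  unfolding vec_eq_iff forall_2 rot_v1 rot_v2
  by (simp add: P1_def P2_def rot_v1 rot_v2 cos_add sin_add algebra_simps)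

lemma scaleR_mv: "(r *\<^sub>R M) *v (y::real^2) = r *\<^sub>R (M *v y)"
  by (simp add: vec_eq_iff matrix_vector_mult_def sum_2 algebra_simps)

lemma P_sq: "(P1 a y)^2 + (P2 a y)^2 = (y$1)^2 + (y$2)^2"
  unfolding P1_def P2_def using sin_cos_squared_add[of a] by algebra

lemma P1_lin: "P1 a (x + s *\<^sub>R v) = P1 a x + s * P1 a v" "P1 a (x - s *\<^sub>R v) = P1 a x - s * P1 a v"
  "P2 a (x + s *\<^sub>R v) = P2 a x + s * P2 a v" "P2 a (x - s *\<^sub>R v) = P2 a x - s * P2 a v"
  by (simp_all add: P1_def P2_def algebra_simps)

lemma rot_quarter:
  "((rot (-(real n * pi/2)) *v y)$1)^2 = (if even n then (y$1)^2 else (y$2)^2) \<and>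
   ((rot (-(real n * pi/2)) *v y)$2)^2 = (if even n then (y$2)^2 else (y$1)^2)"
proof (induction n)
  case 0
  then show ?case by (simp add: rot_v1 rot_v2 P1_def P2_def)
next
  case (Suc n)
  have e: "-(real (Suc n) * pi/2) = -(pi/2) + -(real n * pi/2)" by (simp add: algebra_simps)
  have "rot (-(real (Suc n) * pi/2)) *v y = rot (-(pi/2)) *v (rot (-(real n * pi/2)) *v y)"
    unfolding e rot_mult ..
  moreover define z where "z = rot (-(real n * pi/2)) *v y"
  moreover have "(rot (-(pi/2)) *v z)$1 = z$2" "(rot (-(pi/2)) *v z)$2 = - z$1"
    by (simp_all add: rot_v1 rot_v2 P1_def P2_def)
  ultimately show ?case using Suc.IH by simp
qed

lemma mv_scaleR: "(M::real^2^2) *v (r *\<^sub>R y) = r *\<^sub>R (M *v y)"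
  by (simp add: vec_eq_iff matrix_vector_mult_def sum_2 algebra_simps)

definition nq :: "(nat \<Rightarrow> nat) \<Rightarrow> nat \<Rightarrow> nat" where
  "nq \<sigma> t = (\<Sum>s<t. if \<sigma> s = 1 then 0 else 1)"

lemma nq_Suc: "nq \<sigma> (Suc t) = nq \<sigma> t + (if \<sigma> t = 1 then 0 else 1)"
  by (simp add: nq_def)

lemma sw_formula:
  assumes "A = (\<lambda>i. if i = 1 then \<rho> *\<^sub>R rot \<alpha> else \<rho> *\<^sub>R rot \<beta>)" "\<beta> = \<alpha> - pi/2"
  shows "sw_sol A t x \<sigma> = \<rho>^t *\<^sub>R (rot (real t * \<alpha> - real (nq \<sigma> t) * pi/2) *v x)"
proof (induction t)
  case 0
  then show ?case by (simp add: nq_def vec_eq_iff forall_2 rot_v1 rot_v2 P1_def P2_def)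
next
  case (Suc t)
  define \<theta> where "\<theta> = real t * \<alpha> - real (nq \<sigma> t) * pi/2"
  define a where "a = (if \<sigma> t = 1 then \<alpha> else \<beta>)"
  have Aeq: "A (\<sigma> t) = \<rho> *\<^sub>R rot a" by (simp add: assms(1) a_def)
  have th: "a + \<theta> = real (Suc t) * \<alpha> - real (nq \<sigma> (Suc t)) * pi/2"
    by (simp add: a_def \<theta>_def nq_Suc assms(2) algebra_simps)
  have "sw_sol A (Suc t) x \<sigma> = A (\<sigma> t) *v (\<rho>^t *\<^sub>R (rot \<theta> *v x))"
    using Suc by (simp add: \<theta>_def)
  also have "\<dots> = \<rho>^(Suc t) *\<^sub>R (rot (a + \<theta>) *v x)"
    unfolding Aeq mv_scaleR scaleR_mv rot_mult by simp
  finally show ?case unfolding th .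
qed

definition cst :: "real \<Rightarrow> real^2 \<Rightarrow> bool \<Rightarrow> real" where
  "cst a x e = (if e then (P1 a x)^2 + 2 * (P2 a x)^2 else (P2 a x)^2 + 2 * (P1 a x)^2)"

lemma c_sw:
  assumes "A = (\<lambda>i. if i = 1 then \<rho> *\<^sub>R rot \<alpha> else \<rho> *\<^sub>R rot \<beta>)" "\<beta> = \<alpha> - pi/2"
    and "c = (\<lambda>x. (x $ 1)\<^sup>2 + 2 * (x $ 2)\<^sup>2)"
  shows "c (sw_sol A t x \<sigma>) = (\<rho>^2)^t * cst (real t * \<alpha>) x (even (nq \<sigma> t))"
proof -
  define y where "y = rot (real t * \<alpha>) *v x"
  have e: "-(real (nq \<sigma> t) * pi/2) + real t * \<alpha> = real t * \<alpha> - real (nq \<sigma> t) * pi/2"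
    by simp
  have "sw_sol A t x \<sigma> = \<rho>^t *\<^sub>R (rot (-(real (nq \<sigma> t) * pi/2)) *v y)"
    unfolding sw_formula[OF assms(1,2)] y_def rot_mult e ..
  moreover note rot_quarter[of "nq \<sigma> t" y]
  moreover have "y$1 = P1 (real t * \<alpha>) x" "y$2 = P2 (real t * \<alpha>) x"
    by (simp_all add: y_def rot_v1 rot_v2)
  ultimately show ?thesis
    by (simp add: assms(3) cst_def power_mult_distrib algebra_simps flip: power_mult)
qed

definition ot :: "real \<Rightarrow> nat \<Rightarrow> real^2 \<Rightarrow> real" where
  "ot \<alpha> t x = (if t = 0 then cst (real t * \<alpha>) x True
     else (P1 (real t * \<alpha>) x)^2 + (P2 (real t * \<alpha>) x)^2 + min ((P1 (real t * \<alpha>) x)^2) ((P2 (real t * \<alpha>) x)^2))"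

lemma ot_le_cst: "ot \<alpha> t x \<le> cst (real t * \<alpha>) x (even (nq \<sigma> t))"
  by (cases "t = 0") (auto simp: ot_def cst_def nq_def)

lemma ot_bounds: "0 \<le> ot \<alpha> t x" "ot \<alpha> t x \<le> 2 * ((x$1)^2 + (x$2)^2)"
proof -
  have s: "(P1 (real t * \<alpha>) x)^2 + (P2 (real t * \<alpha>) x)^2 = (x$1)^2 + (x$2)^2" by (rule P_sq)
  show "0 \<le> ot \<alpha> t x" by (simp add: ot_def cst_def)
  have "ot \<alpha> t x \<le> 2 * ((P1 (real t * \<alpha>) x)^2 + (P2 (real t * \<alpha>) x)^2)"
    unfolding ot_def cst_def by (auto simp: min_def)
  then show "ot \<alpha> t x \<le> 2 * ((x$1)^2 + (x$2)^2)" unfolding s .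
qed

definition sstar :: "real \<Rightarrow> real^2 \<Rightarrow> nat \<Rightarrow> nat" where
  "sstar \<alpha> x s = (let d = (\<lambda>t. t = 0 \<or> (P2 (real t * \<alpha>) x)^2 \<le> (P1 (real t * \<alpha>) x)^2)
     in if d (Suc s) = d s then 1 else 2)"

lemma sstar_even: "even (nq (sstar \<alpha> x) t) = (t = 0 \<or> (P2 (real t * \<alpha>) x)^2 \<le> (P1 (real t * \<alpha>) x)^2)"
proof (induction t)
  case 0
  then show ?case by (simp add: nq_def)
next
  case (Suc t)
  then show ?case by (auto simp: nq_Suc sstar_def Let_def)
qed

lemma sstar_opt: "cst (real t * \<alpha>) x (even (nq (sstar \<alpha> x) t)) = ot \<alpha> t x"
  unfolding sstar_even by (auto simp: ot_def cst_def min_def)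

lemma summable_ot: assumes "\<bar>\<rho>\<bar> < 1" shows "summable (\<lambda>t. (\<rho>^2)^t * ot \<alpha> t x)"
proof (rule summable_comparison_test)
  show "\<exists>N. \<forall>n\<ge>N. norm ((\<rho>^2)^n * ot \<alpha> n x) \<le> (\<rho>^2)^n * (2 * ((x$1)^2 + (x$2)^2))"
    using ot_bounds by (auto intro!: mult_left_mono simp: abs_mult)
  have "norm (\<rho>^2) < 1" using assms by (simp add: abs_square_less_1)
  then show "summable (\<lambda>n. (\<rho>^2)^n * (2 * ((x$1)^2 + (x$2)^2)))"
    by (intro summable_mult2 summable_geometric)
qed

lemma J_eq:
  assumes "A = (\<lambda>i. if i = 1 then \<rho> *\<^sub>R rot \<alpha> else \<rho> *\<^sub>R rot \<beta>)" "\<beta> = \<alpha> - pi/2"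
    and "c = (\<lambda>x. (x $ 1)\<^sup>2 + 2 * (x $ 2)\<^sup>2)" and "\<bar>\<rho>\<bar> < 1"
  shows "enn2real (Jstar A c x) = (\<Sum>t. (\<rho>^2)^t * ot \<alpha> t x)"
proof -
  have nn: "\<And>t. 0 \<le> (\<rho>^2)^t * ot \<alpha> t x" using ot_bounds by simp
  have E: "(\<Sum>t. ennreal ((\<rho>^2)^t * ot \<alpha> t x)) = ennreal (\<Sum>t. (\<rho>^2)^t * ot \<alpha> t x)"
    by (rule suminf_ennreal2[OF nn summable_ot[OF assms(4)]])
  have cs: "\<And>t \<sigma>. c (sw_sol A t x \<sigma>) = (\<rho>^2)^t * cst (real t * \<alpha>) x (even (nq \<sigma> t))"
    by (rule c_sw[OF assms(1-3)])
  have "Jstar A c x = ennreal (\<Sum>t. (\<rho>^2)^t * ot \<alpha> t x)"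
  proof (rule antisym)
    have mem: "sstar \<alpha> x \<in> {\<sigma>. \<forall>t. \<sigma> t \<in> {1,2}}" by (auto simp: sstar_def Let_def)
    have eq: "(\<Sum>t. ennreal (c (sw_sol A t x (sstar \<alpha> x)))) = ennreal (\<Sum>t. (\<rho>^2)^t * ot \<alpha> t x)"
      unfolding cs sstar_opt E ..
    show "Jstar A c x \<le> ennreal (\<Sum>t. (\<rho>^2)^t * ot \<alpha> t x)"
      unfolding Jstar_def by (rule INF_lower2[OF mem]) (simp add: eq)
  next
    show "ennreal (\<Sum>t. (\<rho>^2)^t * ot \<alpha> t x) \<le> Jstar A c x"
      unfolding Jstar_def E[symmetric]
    proof (rule INF_greatest)
      fix \<sigma> :: "nat \<Rightarrow> nat"
      show "(\<Sum>t. ennreal ((\<rho>^2)^t * ot \<alpha> t x)) \<le> (\<Sum>t. ennreal (c (sw_sol A t x \<sigma>)))"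
        unfolding cs by (intro suminf_le summableI ennreal_leI mult_left_mono ot_le_cst) simp_all
    qed
  qed
  moreover have "0 \<le> (\<Sum>t. (\<rho>^2)^t * ot \<alpha> t x)"
    by (rule suminf_nonneg[OF summable_ot[OF assms(4)] nn])
  ultimately show ?thesis by simp
qed



lemma sd_bound:
  fixes a1 a2 b1 b2 s :: real
  defines "g \<equiv> \<lambda>u1 u2::real. u1^2 + u2^2 + min (u1^2) (u2^2)"
  shows "g (a1+s*b1) (a2+s*b2) + g (a1-s*b1) (a2-s*b2) - 2 * g a1 a2 \<le> 4* s^2*(b1^2+b2^2)"
    and "a1 = a2 \<Longrightarrow> g (a1+s*b1) (a2+s*b2) + g (a1-s*b1) (a2-s*b2) - 2 * g a1 a2
            \<le> 3* s^2*(b1^2+b2^2) - 2*\<bar>s\<bar>*\<bar>a1\<bar>*\<bar>b1-b2\<bar>"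
proof -
  define U where "U = (a1+s*b1)^2-(a2+s*b2)^2"
  define L where "L = (a1-s*b1)^2-(a2-s*b2)^2"
  define Q where "Q = a1^2-a2^2"
  define B where "B = b1^2-b2^2"
  have m: "\<And>p q::real. min p q = (p + q - \<bar>p - q\<bar>)/2" by (simp add: min_def abs_if)
  have gform: "\<And>u1 u2. g u1 u2 = 3/2*(u1^2+u2^2) - \<bar>u1^2-u2^2\<bar>/2"
    unfolding g_def m by (simp add: field_simps)
  have sq: "(a1+s*b1)^2+(a2+s*b2)^2 + ((a1-s*b1)^2+(a2-s*b2)^2) - 2*(a1^2+a2^2) = 2*(s^2*(b1^2+b2^2))"
    by (simp add: power2_eq_square algebra_simps)
  have eq: "g (a1+s*b1) (a2+s*b2) + g (a1-s*b1) (a2-s*b2) - 2 * g a1 a2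
      = 3*(s^2*(b1^2+b2^2)) + \<bar>Q\<bar> - (\<bar>U\<bar> + \<bar>L\<bar>)/2"
  proof -
    have key: "\<And>P R T W X Y Z::real. P + R - 2*T = 2*W \<Longrightarrow>
       3/2*P - X/2 + (3/2*R - Y/2) - 2*(3/2*T - Z/2) = 3*W + Z - (X+Y)/2" by (simp add: field_simps)
    show ?thesis unfolding gform U_def L_def Q_def by (rule key[OF sq])
  qed
  have c34: "3* s^2*(b1^2+b2^2) = 3*(s^2*(b1^2+b2^2))" "4* s^2*(b1^2+b2^2) = 4*(s^2*(b1^2+b2^2))" by simp_all
  have UL: "U + L = 2*Q + 2* s^2*B" "U - L = 4* s*(a1*b1 - a2*b2)"
    unfolding U_def L_def Q_def B_def by (simp_all add: power2_eq_square algebra_simps)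
  have B: "\<bar>B\<bar> \<le> b1^2+b2^2" unfolding B_def by (rule abs_leI) simp_all
  have t1: "\<bar>U\<bar> + \<bar>L\<bar> \<ge> \<bar>U + L\<bar>" by (rule abs_triangle_ineq)
  have t2: "\<bar>2*Q + 2* s^2*B\<bar> \<ge> 2*\<bar>Q\<bar> - 2*(s^2*\<bar>B\<bar>)"
  proof -
    have "\<bar>2*Q + 2* s^2*B\<bar> \<ge> \<bar>2*Q\<bar> - \<bar>2* s^2*B\<bar>" by arith
    moreover have "\<bar>2* s^2*B\<bar> = 2*(s^2*\<bar>B\<bar>)" by (simp add: abs_mult)
    ultimately show ?thesis by simp
  qed
  have t3: "s^2*\<bar>B\<bar> \<le> s^2*(b1^2+b2^2)" using B by (simp add: mult_left_mono)
  have lin1: "aU + aL \<ge> aUL \<Longrightarrow> aUL \<ge> 2*aQ - 2*V \<Longrightarrow> V \<le> W \<Longrightarrow> 3*W + aQ - (aU+aL)/2 \<le> 4*W" for aU aL aUL aQ V W::real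
    by (simp add: field_simps)
  show "g (a1+s*b1) (a2+s*b2) + g (a1-s*b1) (a2-s*b2) - 2 * g a1 a2 \<le> 4* s^2*(b1^2+b2^2)"
    unfolding eq c34 by (rule lin1[OF t1 t2[folded UL(1)] t3])
  assume a: "a1 = a2"
  have t4: "\<bar>U\<bar> + \<bar>L\<bar> \<ge> \<bar>U - L\<bar>" by (rule abs_triangle_ineq4)
  have t5: "\<bar>U - L\<bar> = 4*(\<bar>s\<bar>*\<bar>a1\<bar>*\<bar>b1-b2\<bar>)"
  proof -
    have "U - L = 4*(s*(a1*(b1-b2)))" unfolding UL(2) a by (simp add: algebra_simps)
    then show ?thesis by (simp add: abs_mult)
  qed
  have Q0: "Q = 0" unfolding Q_def a by simp
  have lin2: "aU + aL \<ge> aD \<Longrightarrow> aD = 4*K \<Longrightarrow> 3*W + \<bar>0::real\<bar> - (aU+aL)/2 \<le> 3*W - 2*K" for aU aL aD W K::real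
    by (simp add: field_simps)
  have c2: "2*\<bar>s\<bar>*\<bar>a1\<bar>*\<bar>b1-b2\<bar> = 2*(\<bar>s\<bar>*\<bar>a1\<bar>*\<bar>b1-b2\<bar>)" by simp
  show "g (a1+s*b1) (a2+s*b2) + g (a1-s*b1) (a2-s*b2) - 2 * g a1 a2
            \<le> 3* s^2*(b1^2+b2^2) - 2*\<bar>s\<bar>*\<bar>a1\<bar>*\<bar>b1-b2\<bar>"
    unfolding eq c34 c2 Q0 by (rule lin2[OF t4 t5])
qed

lemma ot_g: "t \<noteq> 0 \<Longrightarrow> ot \<alpha> t y = (\<lambda>u1 u2::real. u1^2 + u2^2 + min (u1^2) (u2^2)) (P1 (real t * \<alpha>) y) (P2 (real t * \<alpha>) y)"
  by (simp add: ot_def)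

lemma ot_sd: "ot \<alpha> t (x + s *\<^sub>R v) + ot \<alpha> t (x - s *\<^sub>R v) - 2 * ot \<alpha> t x \<le> 4 * s^2*((v$1)^2+(v$2)^2)"
proof (cases "t = 0")
  case True
  have "\<And>y. ot \<alpha> t y = (y$1)^2 + 2*(y$2)^2" using True by (simp add: ot_def cst_def P1_def P2_def)
  moreover have "0 \<le> (s * v$1)^2" by simp
  ultimately show ?thesis by (simp add: power2_eq_square algebra_simps)
next
  case False
  show ?thesis
    unfolding ot_g[OF False] P1_lin P_sq[of "real t * \<alpha>" v, symmetric]
    by (rule sd_bound(1))
qed

lemma ot_sd_k: assumes "t \<noteq> 0" "P1 (real t * \<alpha>) x = P2 (real t * \<alpha>) x"
  shows "ot \<alpha> t (x + s *\<^sub>R v) + ot \<alpha> t (x - s *\<^sub>R v) - 2 * ot \<alpha> t x \<le>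
     3 * s^2*((v$1)^2+(v$2)^2) - 2*\<bar>s\<bar>*\<bar>P1 (real t * \<alpha>) x\<bar>*\<bar>P1 (real t * \<alpha>) v - P2 (real t * \<alpha>) v\<bar>"
    unfolding ot_g[OF assms(1)] P1_lin P_sq[of "real t * \<alpha>" v, symmetric]
    by (rule sd_bound(2)[OF assms(2)])



lemma nondiff:
  fixes \<alpha> \<rho> :: real and x0 :: "real^2" and k :: nat
  assumes r: "\<bar>\<rho>\<bar> < 1" "\<rho> \<noteq> 0" and k: "k \<noteq> 0"
    and eqP: "P1 (real k * \<alpha>) x0 = P2 (real k * \<alpha>) x0" and nz: "P1 (real k * \<alpha>) x0 \<noteq> 0"
  shows "\<not> ((\<lambda>y. \<Sum>t. (\<rho>^2)^t * ot \<alpha> t y) differentiable (at x0))"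
proof
  define F where "F = (\<lambda>y. \<Sum>t. (\<rho>^2)^t * ot \<alpha> t y)"
  define w where "w = \<rho>^2"
  have w: "0 < w" "w < 1" using r by (auto simp: w_def abs_square_less_1)
  define a where "a = \<bar>P1 (real k * \<alpha>) x0\<bar>"
  have a: "0 < a" using nz by (simp add: a_def)
  define v :: "real^2" where "v = vector [cos (real k * \<alpha>), - sin (real k * \<alpha>)]"
  have v: "P1 (real k * \<alpha>) v = 1" "P2 (real k * \<alpha>) v = 0" "(v$1)^2 + (v$2)^2 = 1"
    by (simp_all add: v_def P1_def P2_def power2_eq_square algebra_simps flip: power2_eq_square)
  have vnz: "v \<noteq> 0" using v(3) by auto
  have nv: "norm v > 0" using vnz by simp
  have sm: "\<And>y. (\<lambda>t. w^t * ot \<alpha> t y) sums F y"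
    unfolding F_def w_def by (rule summable_sums[OF summable_ot[OF r(1)]])
  have bound: "F (x0 + s *\<^sub>R v) + F (x0 - s *\<^sub>R v) - 2 * F x0 \<le> 4 * s^2 * (1/(1-w)) - 2*w^k*\<bar>s\<bar>*a" for s
  proof -
    have S1: "(\<lambda>t. w^t * ot \<alpha> t (x0 + s *\<^sub>R v) + w^t * ot \<alpha> t (x0 - s *\<^sub>R v) - 2 * (w^t * ot \<alpha> t x0))
        sums (F (x0 + s *\<^sub>R v) + F (x0 - s *\<^sub>R v) - 2 * F x0)"
      by (intro sums_diff sums_add sums_mult sm)
    have g: "(\<lambda>t. w^t) sums (1/(1-w))" using w by (intro geometric_sums) simp
    have S2: "(\<lambda>t. 4 * s^2 * w^t - (if t = k then 2*w^t*\<bar>s\<bar>*a else 0)) sums (4 * s^2 * (1/(1-w)) - 2*w^k*\<bar>s\<bar>*a)"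
      by (intro sums_diff sums_mult g sums_single[of k "\<lambda>t. 2*w^t*\<bar>s\<bar>*a", simplified])
    have le: "w^t * ot \<alpha> t (x0 + s *\<^sub>R v) + w^t * ot \<alpha> t (x0 - s *\<^sub>R v) - 2 * (w^t * ot \<alpha> t x0)
        \<le> 4 * s^2 * w^t - (if t = k then 2*w^t*\<bar>s\<bar>*a else 0)" for t
    proof -
      have wt: "0 \<le> w^t" using w by simp
      have e: "w^t * ot \<alpha> t (x0 + s *\<^sub>R v) + w^t * ot \<alpha> t (x0 - s *\<^sub>R v) - 2 * (w^t * ot \<alpha> t x0)
          = w^t * (ot \<alpha> t (x0 + s *\<^sub>R v) + ot \<alpha> t (x0 - s *\<^sub>R v) - 2 * ot \<alpha> t x0)"
        by (simp add: algebra_simps)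
      show ?thesis
      proof (cases "t = k")
        case True
        have "ot \<alpha> t (x0 + s *\<^sub>R v) + ot \<alpha> t (x0 - s *\<^sub>R v) - 2 * ot \<alpha> t x0 \<le> 3 * s^2 * 1 - 2*\<bar>s\<bar>*a"
          using ot_sd_k[of t \<alpha> x0 s v] True k eqP v by (simp add: a_def)
        then have "w^t * (ot \<alpha> t (x0 + s *\<^sub>R v) + ot \<alpha> t (x0 - s *\<^sub>R v) - 2 * ot \<alpha> t x0) \<le> w^t * (3 * s^2 * 1 - 2*\<bar>s\<bar>*a)"
          by (rule mult_left_mono[OF _ wt])
        moreover have "w^t * (3 * s^2 * 1 - 2*\<bar>s\<bar>*a) \<le> 4 * s^2 * w^t - 2*w^t*\<bar>s\<bar>*a"
          using wt by (simp add: algebra_simps)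
        ultimately show ?thesis unfolding e using True by simp
      next
        case False
        have "ot \<alpha> t (x0 + s *\<^sub>R v) + ot \<alpha> t (x0 - s *\<^sub>R v) - 2 * ot \<alpha> t x0 \<le> 4 * s^2 * 1"
          using ot_sd[of \<alpha> t x0 s v] v by simp
        then have "w^t * (ot \<alpha> t (x0 + s *\<^sub>R v) + ot \<alpha> t (x0 - s *\<^sub>R v) - 2 * ot \<alpha> t x0) \<le> w^t * (4 * s^2 * 1)"
          by (rule mult_left_mono[OF _ wt])
        then show ?thesis unfolding e using False by (simp add: algebra_simps)
      qed
    qed
    show ?thesis by (rule sums_le[OF le S1 S2])
  qed
  assume "(\<lambda>y. \<Sum>t. (\<rho>^2)^t * ot \<alpha> t y) differentiable (at x0)"
  then obtain D where D: "(F has_derivative D) (at x0)" by (auto simp: differentiable_def F_def)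
  define N where "N = (\<lambda>h. norm (F (x0 + h) - F x0 - D h) / norm h)"
  have lin: "bounded_linear D" and lim: "(N \<longlongrightarrow> 0) (at 0)"
    using D by (auto simp: has_derivative_at N_def)
  have Dneg: "D (- h) = - D h" for h by (simp add: linear_neg bounded_linear.linear[OF lin])
  have fl1: "filterlim (\<lambda>s::real. s *\<^sub>R v) (at 0) (at_right 0)"
  proof (rule filterlim_atI)
    have "((\<lambda>s::real. s *\<^sub>R v) \<longlongrightarrow> 0 *\<^sub>R v) (at_right 0)" by (intro tendsto_intros)
    then show "((\<lambda>s::real. s *\<^sub>R v) \<longlongrightarrow> 0) (at_right 0)" by simp
    show "\<forall>\<^sub>F s in at_right 0. s *\<^sub>R v \<noteq> 0"
      using eventually_at_right_less[of "0::real"] by eventually_elim (use vnz in simp)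
  qed
  have fl2: "filterlim (\<lambda>s::real. - (s *\<^sub>R v)) (at 0) (at_right 0)"
  proof (rule filterlim_atI)
    have "((\<lambda>s::real. - (s *\<^sub>R v)) \<longlongrightarrow> - (0 *\<^sub>R v)) (at_right 0)" by (intro tendsto_intros)
    then show "((\<lambda>s::real. - (s *\<^sub>R v)) \<longlongrightarrow> 0) (at_right 0)" by simp
    show "\<forall>\<^sub>F s in at_right 0. - (s *\<^sub>R v) \<noteq> 0"
      using eventually_at_right_less[of "0::real"] by eventually_elim (use vnz in simp)
  qed
  have L1: "((\<lambda>s. N (s *\<^sub>R v)) \<longlongrightarrow> 0) (at_right 0)" by (rule filterlim_compose[OF lim fl1])
  have L2: "((\<lambda>s. N (- (s *\<^sub>R v))) \<longlongrightarrow> 0) (at_right 0)" by (rule filterlim_compose[OF lim fl2])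
  have LL: "((\<lambda>s. - (norm v * (N (s *\<^sub>R v) + N (- (s *\<^sub>R v))))) \<longlongrightarrow> - (norm v * (0 + 0))) (at_right 0)"
    by (intro tendsto_intros L1 L2)
  have LR: "((\<lambda>s::real. 4 * s * (1/(1-w)) - 2*w^k*a) \<longlongrightarrow> 4 * 0 * (1/(1-w)) - 2*w^k*a) (at_right 0)"
    by (intro tendsto_intros)
  have ev: "\<forall>\<^sub>F s in at_right 0. - (norm v * (N (s *\<^sub>R v) + N (- (s *\<^sub>R v)))) \<le> 4 * s * (1/(1-w)) - 2*w^k*a"
    using eventually_at_right_less[of "0::real"]
  proof eventually_elim
    case (elim s)
    have ns: "norm (s *\<^sub>R v) = s * norm v" "norm (- (s *\<^sub>R v)) = s * norm v" using elim by simp_all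
    have pos: "s * norm v > 0" using elim nv by simp
    have e1: "\<bar>F (x0 + s *\<^sub>R v) - F x0 - D (s *\<^sub>R v)\<bar> = N (s *\<^sub>R v) * (s * norm v)"
      unfolding N_def ns(1) using pos elim linear_0[OF bounded_linear.linear[OF lin]] by simp
    have e2: "\<bar>F (x0 - s *\<^sub>R v) - F x0 + D (s *\<^sub>R v)\<bar> = N (- (s *\<^sub>R v)) * (s * norm v)"
      unfolding N_def ns(2) Dneg using pos elim linear_0[OF bounded_linear.linear[OF lin]] by simp
    have "F (x0 + s *\<^sub>R v) + F (x0 - s *\<^sub>R v) - 2 * F x0 \<ge> - (N (s *\<^sub>R v) * (s * norm v)) - N (- (s *\<^sub>R v)) * (s * norm v)"
      using e1 e2 by linarith
    moreover have "F (x0 + s *\<^sub>R v) + F (x0 - s *\<^sub>R v) - 2 * F x0 \<le> 4 * s^2 * (1/(1-w)) - 2*w^k* s *a"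
      using bound[of s] elim by simp
    ultimately have "s * (- (norm v * (N (s *\<^sub>R v) + N (- (s *\<^sub>R v))))) \<le> s * (4 * s * (1/(1-w)) - 2*w^k*a)"
      by (simp add: algebra_simps power2_eq_square)
    then show ?case using elim by (rule mult_left_le_imp_le)
  qed
  have "4 * 0 * (1/(1-w)) - 2*w^k*a \<ge> - (norm v * (0 + 0))"
    by (rule tendsto_le[OF trivial_limit_at_right_real LR LL ev])
  moreover have "0 < a * w^k" using w a by simp
  ultimately show False by simp
qed



lemma dense_angles:
  fixes \<alpha> :: real
  assumes irr: "\<alpha> / pi \<notin> \<rat>"
  shows "closure {pi/4 - real k * \<alpha> + real_of_int h * pi | k h. k \<noteq> 0} = UNIV"
proof -
  define S where "S = {pi/4 - real k * \<alpha> + real_of_int h * pi | k h. k \<noteq> 0}"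
  have "z \<in> closure S" for z
    unfolding closure_approachable
  proof (intro allI impI)
    fix e :: real assume e: "e > 0"
    obtain h k where k: "k > 0" and hk: "\<bar>of_int k * (\<alpha>/pi) - of_int h - (pi/4 - z)/pi\<bar> < e/pi"
      by (rule sequence_of_fractional_parts_is_dense[of "\<alpha>/pi" "e/pi" "(pi/4 - z)/pi"]) (use irr e in auto)
    define kk where "kk = nat k"
    have kk: "real kk = of_int k" "kk \<noteq> 0" using k by (auto simp: kk_def)
    have "of_int k * (\<alpha>/pi) - of_int h - (pi/4 - z)/pi = (of_int k * \<alpha> - of_int h * pi - pi/4 + z) / pi"
      by (simp add: field_simps)
    then have "\<bar>of_int k * \<alpha> - of_int h * pi - pi/4 + z\<bar> / pi < e / pi"
      using hk by simp
    then have "\<bar>of_int k * \<alpha> - of_int h * pi - pi/4 + z\<bar> < e"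
      using pi_gt_zero divide_less_cancel by blast
    moreover have "pi/4 - real kk * \<alpha> + real_of_int h * pi \<in> S"
      unfolding S_def using kk by blast
    moreover have "dist (pi/4 - real kk * \<alpha> + real_of_int h * pi) z = \<bar>of_int k * \<alpha> - of_int h * pi - pi/4 + z\<bar>"
      unfolding dist_real_def kk by (simp add: abs_minus_commute[of "pi/4 - _"] algebra_simps)
    ultimately show "\<exists>y\<in>S. dist y z < e" by metis
  qed
  then show ?thesis unfolding S_def[symmetric] by auto
qed

lemma sin_int_pi: "sin (real_of_int h * pi) = 0"
  using sin_times_pi_eq_0[of "real_of_int h"] by simp

lemma dense_D:
  fixes \<alpha> :: real
  assumes irr: "\<alpha> / pi \<notin> \<rat>"
  shows "closure {x::real^2. \<exists>k. k \<noteq> 0 \<and> P1 (real k * \<alpha>) x = P2 (real k * \<alpha>) x \<and> P1 (real k * \<alpha>) x \<noteq> 0} = UNIV"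
proof -
  define D where "D = {x::real^2. \<exists>k. k \<noteq> 0 \<and> P1 (real k * \<alpha>) x = P2 (real k * \<alpha>) x \<and> P1 (real k * \<alpha>) x \<noteq> 0}"
  define S where "S = {pi/4 - real k * \<alpha> + real_of_int h * pi | k h. k \<noteq> 0}"
  have cS: "closure S = UNIV" unfolding S_def by (rule dense_angles[OF irr])
  define g where "g = (\<lambda>r u. (\<chi> i. if i = 1 then r * cos u else r * sin u) :: real^2)"
  have g12: "g r u $ 1 = r * cos u" "g r u $ 2 = r * sin u" for r u by (simp_all add: g_def)
  have cont: "continuous_on A (g r)" for r A
    unfolding g_def
  proof (intro continuous_on_vec_lambda)
    fix i :: 2
    show "continuous_on A (\<lambda>x. if i = 1 then r * cos x else r * sin x)"
      by (cases "i = 1") (simp_all add: continuous_intros)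
  qed
  have gS: "g r ` S \<subseteq> D" if r: "r > 0" for r
  proof
    fix y assume "y \<in> g r ` S"
    then obtain k h where k: "k \<noteq> 0" and y: "y = g r (pi/4 - real k * \<alpha> + real_of_int h * pi)"
      unfolding S_def by blast
    define u where "u = pi/4 - real k * \<alpha> + real_of_int h * pi"
    have ku: "real k * \<alpha> + u = pi/4 + real_of_int h * pi" by (simp add: u_def)
    have "P1 (real k * \<alpha>) y = r * cos (real k * \<alpha> + u)"
      unfolding y u_def[symmetric] P1_def g12 cos_add by (simp add: algebra_simps)
    also have "\<dots> = r * (sqrt 2 / 2) * cos (real_of_int h * pi)"
      unfolding ku cos_add cos_45 sin_45 sin_int_pi by simp
    finally have p1: "P1 (real k * \<alpha>) y = r * (sqrt 2 / 2) * cos (real_of_int h * pi)" .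
    have "P2 (real k * \<alpha>) y = r * sin (real k * \<alpha> + u)"
      unfolding y u_def[symmetric] P2_def g12 sin_add by (simp add: algebra_simps)
    also have "\<dots> = r * (sqrt 2 / 2) * cos (real_of_int h * pi)"
      unfolding ku sin_add cos_45 sin_45 sin_int_pi by simp
    finally have p2: "P2 (real k * \<alpha>) y = r * (sqrt 2 / 2) * cos (real_of_int h * pi)" .
    have "cos (real_of_int h * pi) \<noteq> 0"
      using sin_cos_squared_add[of "real_of_int h * pi"] sin_int_pi[of h] by auto
    then have "P1 (real k * \<alpha>) y \<noteq> 0" unfolding p1 using r by simp
    then show "y \<in> D" unfolding D_def using k p1 p2 by auto
  qed
  have sub: "g r ` UNIV \<subseteq> closure D" if "r > 0" for r
  proof -
    have "g r ` closure S \<subseteq> closure D"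
      by (rule image_closure_subset[OF cont closed_closure]) (use gS[OF that] closure_subset in blast)
    then show ?thesis unfolding cS .
  qed
  have "- {0} \<subseteq> closure D"
  proof
    fix y :: "real^2" assume "y \<in> - {0}"
    then have ynz: "y \<noteq> 0" by simp
    define r where "r = sqrt ((y$1)^2 + (y$2)^2)"
    have "(y$1)^2 + (y$2)^2 \<noteq> 0"
    proof
      assume "(y$1)^2 + (y$2)^2 = 0"
      then have "y$1 = 0" "y$2 = 0" by (simp_all add: sum_power2_eq_zero_iff)
      then have "y = 0" by (simp add: vec_eq_iff forall_2)
      with ynz show False by simp
    qed
    then have r0: "r > 0" unfolding r_def by (simp add: add_pos_nonneg sum_power2_ge_zero sum_power2_gt_zero_iff)
    have r2: "r^2 = (y$1)^2 + (y$2)^2" unfolding r_def by simp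
    have "(y$1 / r)^2 + (y$2 / r)^2 = ((y$1)^2 + (y$2)^2) / r^2"
      by (simp add: power_divide add_divide_distrib)
    also have "\<dots> = 1" unfolding r2[symmetric] using r0 by simp
    finally have "(y$1 / r)^2 + (y$2 / r)^2 = 1" .
    then obtain t where t: "y$1 / r = cos t" "y$2 / r = sin t" by (rule sincos_total_2pi)
    have "y = g r t"
      using t r0 by (simp add: vec_eq_iff forall_2 g12 field_simps)
    then show "y \<in> closure D" using sub[OF r0] by blast
  qed
  then have "closure (- {0}) \<subseteq> closure D"
    by (metis closure_closure closure_mono)
  moreover have "closure (- {0::real^2}) = UNIV" by (simp add: closure_interior)
  ultimately show ?thesis unfolding D_def[symmetric] by auto
qed


theorem corollary3:
  fixes \<alpha> \<beta> \<rho> :: real and A :: "nat \<Rightarrow> real^2^2" and c :: "real^2 \<Rightarrow> real"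
  assumes "pi / 8 < \<alpha>" "\<alpha> < 3 * pi / 8" "\<alpha> / pi \<notin> \<rat>"
    and "\<beta> = \<alpha> - pi / 2" and "\<rho> = 1 / 100"
    and "A = (\<lambda>i. if i = 1 then \<rho> *\<^sub>R rot \<alpha> else \<rho> *\<^sub>R rot \<beta>)"
    and "c = (\<lambda>x. (x $ 1)\<^sup>2 + 2 * (x $ 2)\<^sup>2)"
  shows "\<exists>D::(real^2) set. closure D = UNIV \<and>
           (\<forall>x\<in>D. \<not> ((\<lambda>y. enn2real (Jstar A c y)) differentiable (at x)))"
proof -
  define D where "D = {x::real^2. \<exists>k. k \<noteq> 0 \<and> P1 (real k * \<alpha>) x = P2 (real k * \<alpha>) x \<and> P1 (real k * \<alpha>) x \<noteq> 0}"
  have cD: "closure D = UNIV" unfolding D_def by (rule dense_D[OF assms(3)])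
  have r: "\<bar>\<rho>\<bar> < 1" "\<rho> \<noteq> 0" using assms(5) by simp_all
  have F: "(\<lambda>y. enn2real (Jstar A c y)) = (\<lambda>y. \<Sum>t. (\<rho>^2)^t * ot \<alpha> t y)"
    using J_eq[OF assms(6) assms(4) assms(7) r(1)] by simp
  have "\<forall>x\<in>D. \<not> ((\<lambda>y. enn2real (Jstar A c y)) differentiable (at x))"
  proof
    fix x assume "x \<in> D"
    then obtain k where k: "k \<noteq> 0" "P1 (real k * \<alpha>) x = P2 (real k * \<alpha>) x" "P1 (real k * \<alpha>) x \<noteq> 0"
      unfolding D_def by blast
    show "\<not> ((\<lambda>y. enn2real (Jstar A c y)) differentiable (at x))"
      unfolding F by (rule nondiff[OF r k])
  qed
  with cD show ?thesis by blast
qed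

end
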